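(* The rectangle locus for two pairs of lines in the plane is a hyperbola if and only if neither pair consists of parallel lines, at most one pair consists of orthogonal lines, and the pairs are not translations of each other.
   Context: A pair of lines means two distinct lines; two pairs of lines are distinct pairs, possibly sharing one line. The rectangle locus of two pairs $L_1,L_3$ and $L_2,L_4$ is the set of points $p$ in the plane that are the midpoint both of a segment joining $L_1$ and $L_3$ and of a segment joining $L_2$ and $L_4$, these two segments having equal length (equivalently, centers of possibly degenerate rectangles whose diagonals join the lines of the respective pairs). Here a hyperbola means a set $\{{\bf x}\in\mathbb{R}^2:({\bf x}-{\bf p})^TC({\bf x}-{\bf p})=k\}$ with $C$ a real symmetric $2\times2$ matrix with $\det C<0$, ${\bf p}\in\mathbb{R}^2$, $k\in\mathbb{R}$; the case $k=0$ (a pair of crossing lines) is a degenerate hyperbola and is allowed. One pair is a translation of the other if it is its image under a translation of the plane. *)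

theory Defs
  imports "HOL-Analysis.Analysis"
begin

type_synonym point = "real^2"

definition line_through :: "point \<Rightarrow> point \<Rightarrow> point set" where
  "line_through p d = {p + t *\<^sub>R d | t. True}"

definition is_line :: "point set \<Rightarrow> bool" where
  "is_line L \<longleftrightarrow> (\<exists>p d. d \<noteq> 0 \<and> L = line_through p d)"

definition parallel_lines :: "point set \<Rightarrow> point set \<Rightarrow> bool" where
  "parallel_lines L M \<longleftrightarrow>
     (\<exists>p q d. d \<noteq> 0 \<and> L = line_through p d \<and> M = line_through q d)"

definition orthogonal_lines :: "point set \<Rightarrow> point set \<Rightarrow> bool" where
  "orthogonal_lines L M \<longleftrightarrow>
     (\<exists>p q d e. d \<noteq> 0 \<and> e \<noteq> 0 \<and> d \<bullet> e = 0 \<and>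
        L = line_through p d \<and> M = line_through q e)"

definition rectangle_locus ::
  "point set \<Rightarrow> point set \<Rightarrow> point set \<Rightarrow> point set \<Rightarrow> point set" where
  "rectangle_locus L1 L3 L2 L4 =
     {x. \<exists>a\<in>L1. \<exists>c\<in>L3. \<exists>b\<in>L2. \<exists>d\<in>L4.
           midpoint a c = x \<and> midpoint b d = x \<and> dist a c = dist b d}"

text \<open>Hyperbola (possibly degenerate, k = 0 allowed).\<close>
definition is_hyperbola :: "point set \<Rightarrow> bool" where
  "is_hyperbola S \<longleftrightarrow>
     (\<exists>(C::real^2^2) (p::point) (k::real).
        transpose C = C \<and> det C < 0 \<and>
        S = {x. (x - p) \<bullet> (C *v (x - p)) = k})"

definition pair_translate :: "point set \<Rightarrow> point set \<Rightarrow> point set \<Rightarrow> point set \<Rightarrow> bool" where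
  "pair_translate L1 L3 L2 L4 \<longleftrightarrow>
     (\<exists>v::point. {(\<lambda>x. x + v) ` L1, (\<lambda>x. x + v) ` L3} = {L2, L4})"

end

theory Submission
  imports Defs
begin


lemma null_vecs:
  fixes al be ga :: real assumes "al* ga < be^2"
  obtains a1 a2 b1 b2 where "al* a1^2 + 2* be* a1* a2 + ga* a2^2 = 0" "al* b1^2 + 2* be* b1* b2 + ga* b2^2 = 0"
   "al* a1* b1 + be*(a1* b2 + a2* b1) + ga* a2* b2 \<noteq> 0" "a1* b2 - a2* b1 \<noteq> 0"
proof (cases "al = 0")
  case True
  then have "be \<noteq> 0" using assms by auto
  show ?thesis
    apply (rule that[of 1 0 ga "-2* be"])
    using True \<open>be \<noteq> 0\<close> by (auto simp: power2_eq_square algebra_simps)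
next
  case False
  define s where "s = sqrt (be^2 - al* ga)"
  have s2: "s^2 = be^2 - al* ga" unfolding s_def using assms by simp
  have sp: "s > 0" unfolding s_def using assms by simp
  show ?thesis
  proof (rule that[of "-be+s" al "-be-s" al])
    show "al * (- be + s)\<^sup>2 + 2 * be * (- be + s) * al + ga * al\<^sup>2 = 0"
      using s2 by algebra
    show "al * (- be - s)\<^sup>2 + 2 * be * (- be - s) * al + ga * al\<^sup>2 = 0"
      using s2 by algebra
    have "al * (- be + s) * (- be - s) + be * ((- be + s) * al + al * (- be - s)) + ga * al * al
          = -2* al* s^2" using s2 by algebra
    then show "al * (- be + s) * (- be - s) + be * ((- be + s) * al + al * (- be - s)) + ga * al * al \<noteq> 0"
      using False sp by simp
    have "(- be + s) * al - al * (- be - s) = 2* s* al" by algebra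
    then show "(- be + s) * al - al * (- be - s) \<noteq> 0" using False sp by simp
  qed
qed

lemma no_line:
  fixes al be ga k w1 w2 c :: real
  assumes "al* ga < be^2" "\<forall>y1 y2. al* y1^2 + 2* be* y1* y2 + ga* y2^2 = k \<longrightarrow> w1* y1 + w2* y2 = c"
  shows "w1 = 0 \<and> w2 = 0"
proof -
  define Q where "Q = (\<lambda>y1 y2. al* y1^2 + 2* be* y1* y2 + ga* y2^2)"
  have H: "\<And>y1 y2. Q y1 y2 = k \<Longrightarrow> w1* y1 + w2* y2 = c" using assms(2) unfolding Q_def by blast
  obtain a1 a2 b1 b2 where qa: "Q a1 a2 = 0" and qb: "Q b1 b2 = 0"
    and bv: "al* a1* b1 + be*(a1* b2 + a2* b1) + ga* a2* b2 \<noteq> 0" and cr: "a1* b2 - a2* b1 \<noteq> 0"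
    using null_vecs[OF assms(1)] unfolding Q_def by metis
  define B where "B = al* a1* b1 + be*(a1* b2 + a2* b1) + ga* a2* b2"
  have expand: "\<And>s t. Q (s* a1 + t* b1) (s* a2 + t* b2) = s^2 * Q a1 a2 + 2* s* t* B + t^2 * Q b1 b2"
    unfolding Q_def B_def by algebra
  have expand': "\<And>s t. Q (s* a1 + t* b1) (s* a2 + t* b2) = 2* s* t* B"
    using expand qa qb by simp
  define m where "m = k/(2* B)"
  have Bnz: "B \<noteq> 0" using bv B_def by simp
  have k1: "Q (1* a1 + m* b1) (1* a2 + m* b2) = k" using expand'[of 1 m] Bnz by (simp add: m_def)
  have k2: "Q ((-1)* a1 + (-m)* b1) ((-1)* a2 + (-m)* b2) = k" using expand'[of "-1" "-m"] Bnz by (simp add: m_def)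
  have k3: "Q (2* a1 + (m/2)* b1) (2* a2 + (m/2)* b2) = k" using expand'[of 2 "m/2"] Bnz by (simp add: m_def)
  have e1: "w1*(1* a1 + m* b1) + w2*(1* a2 + m* b2) = c" using H[OF k1] .
  have e2: "w1*((-1)* a1 + (-m)* b1) + w2*((-1)* a2 + (-m)* b2) = c" using H[OF k2] .
  have e3: "w1*(2* a1 + (m/2)* b1) + w2*(2* a2 + (m/2)* b2) = c" using H[OF k3] .
  have c0: "c = 0" using e1 e2 by (simp add: algebra_simps)
  have wa_b: "w1* a1 + w2* a2 = 0 \<and> w1* b1 + w2* b2 = 0"
  proof (cases "m = 0")
    case True
    then have "k = 0" using Bnz m_def by simp
    then have "w1* b1 + w2* b2 = c" using H qb by simp
    then show ?thesis using e1 True c0 by simp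
  next
    case False
    have "(w1* b1 + w2* b2) * (3* m/2) = 0" using e1 e3 c0 by (simp add: algebra_simps)
    then have "w1* b1 + w2* b2 = 0" using False by simp
    moreover have "w1* a1 + w2* a2 = (w1*(1* a1 + m* b1) + w2*(1* a2 + m* b2)) - m*(w1* b1+w2* b2)" by algebra
    ultimately show ?thesis using e1 c0 by simp
  qed
  have "w1*(a1* b2 - a2* b1) = b2*(w1* a1 + w2* a2) - a2*(w1* b1 + w2* b2)" by algebra
  then have "w1 = 0" using wa_b cr by simp
  moreover have "w2*(a1* b2 - a2* b1) = a1*(w1* b1 + w2* b2) - b1*(w1* a1 + w2* a2)" by algebra
  then have "w2 = 0" using wa_b cr by simp
  ultimately show ?thesis by simp
qed

lemma no_univ:
  fixes al be ga k :: real
  assumes "al* ga < be^2" "\<forall>y1 y2. al* y1^2 + 2* be* y1* y2 + ga* y2^2 = k"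
  shows False
proof -
  have "k = 0" using assms(2)[rule_format, of 0 0] by simp
  moreover have "al = k" using assms(2)[rule_format, of 1 0] by simp
  moreover have "ga = k" using assms(2)[rule_format, of 0 1] by simp
  moreover have "al + 2* be + ga = k" using assms(2)[rule_format, of 1 1] by simp
  ultimately show False using assms(1) by simp
qed

lemma det_alg:
  fixes r u v r' u' v' :: real
  assumes "r^2 + u* v = 1" "r'^2 + u'* v' = 1"
  shows "(r^2+v^2-r'^2-v'^2)*(r^2+u^2-r'^2-u'^2) - (r*(u-v) - r'*(u'-v'))^2
     = -((u'* v - v'* u)^2 + (r'*(u-v) - r*(u'-v'))^2)"
proof -
  have "(r^2+v^2-r'^2-v'^2)*(r^2+u^2-r'^2-u'^2) - (r*(u-v) - r'*(u'-v'))^2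
     = -((u'* v - v'* u)^2 + (r'*(u-v) - r*(u'-v'))^2) + ((r^2+u* v) - (r'^2+u'* v'))^2" by algebra
  then show ?thesis using assms by simp
qed

lemma det_zero_cases:
  fixes r u v r' u' v' :: real
  assumes "r^2 + u* v = 1" "r'^2 + u'* v' = 1" "u'* v = v'* u" "r'*(u-v) = r*(u'-v')"
  shows "(u = v \<and> u' = v') \<or> (r' = r \<and> u' = u \<and> v' = v) \<or> (r' = -r \<and> u' = -u \<and> v' = -v)"
proof (cases "u = v")
  case True
  then have "r^2 + u^2 = 1" using assms(1) by (simp add: power2_eq_square)
  moreover have "r*(u'-v') = 0" using assms(4) True by simp
  moreover have "u*(u'-v') = 0" using assms(3) True by (simp add: algebra_simps)
  ultimately have "u' = v'"
  proof -
    assume a: "r^2 + u^2 = 1" "r*(u'-v') = 0" "u*(u'-v') = 0"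
    show "u' = v'"
    proof (rule ccontr)
      assume "u' \<noteq> v'"
      then have "r = 0" "u = 0" using a by auto
      then show False using a by simp
    qed
  qed
  then show ?thesis using True by simp
next
  case False
  define l where "l = (u'-v')/(u-v)"
  have uv: "u' - v' = l*(u-v)" using False unfolding l_def by simp
  have rr: "r' = l* r" using assms(4) uv False by (metis mult.commute mult.left_commute mult_cancel_left right_minus_eq)
  have u'eq: "u' = v' + l*(u-v)" using uv by simp
  have "(v' + l*(u-v))* v = u* v'" using assms(3) by (simp add: u'eq[symmetric] mult.commute)
  then have "(u-v)*(l* v - v') = 0" by (simp add: algebra_simps)
  then have vv: "v' = l* v" using False by simp
  have uu: "u' = l* u" using uv vv by (simp add: algebra_simps)
  have "l^2 * (r^2 + u* v) = 1" using assms(2) rr uu vv by (simp add: algebra_simps power2_eq_square)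
  then have "l^2 = 1" using assms(1) by simp
  then have "l = 1 \<or> l = -1" by (simp add: power2_eq_1_iff)
  then show ?thesis using rr uu vv by auto
qed



lemma vec2_eq: "(x::real^2) = y \<longleftrightarrow> x$1 = y$1 \<and> x$2 = y$2"
  by (simp add: vec_eq_iff forall_2)

lemma quadform: "(y::real^2) \<bullet> (C *v y) = C$1$1* y$1^2 + (C$1$2 + C$2$1)* y$1* y$2 + C$2$2* y$2^2"
  by (simp add: inner_vec_def matrix_vector_mult_def sum_2 power2_eq_square algebra_simps)

lemma hyp_unfold:
  assumes "is_hyperbola S"
  obtains al be ga p1 p2 k where "al* ga < be^2"
    "\<And>x. x \<in> S \<longleftrightarrow> al*(x$1-p1)^2 + 2* be*(x$1-p1)*(x$2-p2) + ga*(x$2-p2)^2 = k"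
proof -
  obtain C :: "real^2^2" and p :: "real^2" and k where
    tC: "transpose C = C" and dC: "det C < 0" and S: "S = {x. (x - p) \<bullet> (C *v (x - p)) = k}"
    using assms unfolding is_hyperbola_def by blast
  have "C$1$2 = (transpose C)$2$1" by (simp add: transpose_def)
  then have c12: "C$2$1 = C$1$2" using tC by simp
  have "C$1$1 * C$2$2 < (C$1$2)^2" using dC c12 by (simp add: det_2 power2_eq_square)
  moreover have "\<And>x. x \<in> S \<longleftrightarrow> C$1$1*(x$1-p$1)^2 + 2* C$1$2*(x$1-p$1)*(x$2-p$2) + C$2$2*(x$2-p$2)^2 = k"
    unfolding S using c12 by (simp add: quadform)
  ultimately show ?thesis by (rule that)
qed

lemma hyp_unfold':
  assumes "is_hyperbola S"
  shows "\<exists>al be ga p1 p2 k. al* ga < be^2 \<and>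
    (\<forall>x. x \<in> S \<longleftrightarrow> al*(x$1-p1)^2 + 2* be*(x$1-p1)*(x$2-p2) + ga*(x$2-p2)^2 = k)"
proof -
  obtain C :: "real^2^2" and p :: "real^2" and k where
    tC: "transpose C = C" and dC: "det C < 0" and S: "S = {x. (x - p) \<bullet> (C *v (x - p)) = k}"
    using assms unfolding is_hyperbola_def by blast
  have "C$1$2 = (transpose C)$2$1" by (simp add: transpose_def)
  then have c12: "C$2$1 = C$1$2" using tC by simp
  have "C$1$1 * C$2$2 < (C$1$2)^2" using dC c12 by (simp add: det_2 power2_eq_square)
  moreover have "\<forall>x. x \<in> S \<longleftrightarrow> C$1$1*(x$1-p$1)^2 + 2* C$1$2*(x$1-p$1)*(x$2-p$2) + C$2$2*(x$2-p$2)^2 = k"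
    unfolding S using c12 by (simp add: quadform)
  ultimately show ?thesis by blast
qed

lemma hyp_not_line:
  assumes "is_hyperbola S" "S \<subseteq> {x. w1* x$1 + w2* x$2 = c}"
  shows "w1 = 0 \<and> w2 = 0"
proof -
  obtain al be ga p1 p2 k where dm: "al* ga < be^2 \<and>
    (\<forall>x. x \<in> S \<longleftrightarrow> al*(x$1-p1)^2 + 2* be*(x$1-p1)*(x$2-p2) + ga*(x$2-p2)^2 = k)"
    using hyp_unfold'[OF assms(1)] by (elim exE) (rule that)
  have d: "al* ga < be^2" using dm by simp
  have mem: "\<And>x. x \<in> S \<longleftrightarrow> al*(x$1-p1)^2 + 2* be*(x$1-p1)*(x$2-p2) + ga*(x$2-p2)^2 = k" using dm by simp
  show ?thesis
  proof (rule no_line[OF d, of k w1 w2 "c - w1* p1 - w2* p2"], intro allI impI)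
    fix y1 y2 assume h: "al * y1\<^sup>2 + 2 * be * y1 * y2 + ga * y2\<^sup>2 = k"
    define x :: "real^2" where "x = vector [p1 + y1, p2 + y2]"
    have "x \<in> S" using h by (simp add: mem x_def)
    then have "w1* x$1 + w2* x$2 = c" using assms(2) by blast
    then show "w1 * y1 + w2 * y2 = c - w1 * p1 - w2 * p2" by (simp add: x_def algebra_simps)
  qed
qed

lemma hyp_not_univ:
  assumes "is_hyperbola S" shows "S \<noteq> UNIV"
proof
  assume U: "S = UNIV"
  obtain al be ga p1 p2 k where dm: "al* ga < be^2 \<and>
    (\<forall>x. x \<in> S \<longleftrightarrow> al*(x$1-p1)^2 + 2* be*(x$1-p1)*(x$2-p2) + ga*(x$2-p2)^2 = k)"
    using hyp_unfold'[OF assms(1)] by (elim exE) (rule that)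
  have d: "al* ga < be^2" using dm by simp
  have mem: "\<And>x. x \<in> S \<longleftrightarrow> al*(x$1-p1)^2 + 2* be*(x$1-p1)*(x$2-p2) + ga*(x$2-p2)^2 = k" using dm by simp
  show False
  proof (rule no_univ[OF d, of k], intro allI)
    fix y1 y2
    define x :: "real^2" where "x = vector [p1 + y1, p2 + y2]"
    have "x \<in> S" using U by simp
    then show "al * y1\<^sup>2 + 2 * be * y1 * y2 + ga * y2\<^sup>2 = k" by (simp add: mem x_def)
  qed
qed

lemma affine_not_hyp:
  assumes "\<forall>x. f x = D* x$1 + E* x$2 + F"
  shows "\<not> is_hyperbola {x. f x = 0}"
proof
  assume h: "is_hyperbola {x. f x = 0}"
  show False
  proof (cases "D = 0 \<and> E = 0")
    case True
    show False
    proof (cases "F = 0")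
      case True
      then have "{x. f x = 0} = UNIV" using assms \<open>D = 0 \<and> E = 0\<close> by auto
      then show False using hyp_not_univ[OF h] by simp
    next
      case False
      then have "{x. f x = 0} \<subseteq> {x. 1* x$1 + 0* x$2 = 0}" using assms \<open>D = 0 \<and> E = 0\<close> by auto
      from hyp_not_line[OF h this] show False by simp
    qed
  next
    case False
    have "{x. f x = 0} \<subseteq> {x. D* x$1 + E* x$2 = -F}" using assms by auto
    from hyp_not_line[OF h this] show False using False by simp
  qed
qed

lemma quad_hyp:
  assumes f: "\<forall>x. f x = A* x$1^2 + 2* B* x$1* x$2 + C* x$2^2 + D* x$1 + E* x$2 + F"
    and neg: "A* C < B^2"
  shows "is_hyperbola {x. f x = 0}"
proof -
  define dl where "dl = A* C - B^2"
  have dl0: "dl \<noteq> 0" using neg dl_def by simp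
  define iv where "iv = 1/(2* dl)"
  have iv: "iv*(2* dl) = 1" using dl0 unfolding iv_def by simp
  define p1 where "p1 = (B* E - C* D)* iv"
  define p2 where "p2 = (B* D - A* E)* iv"
  have e1: "D = -2*(A* p1 + B* p2)" unfolding p1_def p2_def using iv dl_def by algebra
  have e2: "E = -2*(B* p1 + C* p2)" unfolding p1_def p2_def using iv dl_def by algebra
  define k where "k = A* p1^2 + 2* B* p1* p2 + C* p2^2 - F"
  define Cm :: "real^2^2" where "Cm = vector [vector [A, B], vector [B, C]]"
  define p :: "real^2" where "p = vector [p1, p2]"
  have tC: "transpose Cm = Cm" unfolding Cm_def
    by (simp add: vec_eq_iff forall_2 transpose_def)
  have dC: "det Cm < 0" unfolding Cm_def using neg by (simp add: det_2 power2_eq_square)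
  have "{x. f x = 0} = {x. (x - p) \<bullet> (Cm *v (x - p)) = k}"
  proof (rule Collect_cong)
    fix x :: "real^2"
    have "(x - p) \<bullet> (Cm *v (x - p)) - k = f x"
      unfolding quadform f[rule_format] Cm_def p_def k_def e1 e2 by (simp add: power2_eq_square algebra_simps)
    then show "f x = 0 \<longleftrightarrow> (x - p) \<bullet> (Cm *v (x - p)) = k" by linarith
  qed
  then show ?thesis unfolding is_hyperbola_def using tC dC by blast
qed



definition cr :: "real^2 \<Rightarrow> real^2 \<Rightarrow> real" where "cr a b = a$1* b$2 - a$2* b$1"
definition rr :: "real^2 \<Rightarrow> real^2 \<Rightarrow> real" where "rr d e = (d$1* e$2 + d$2* e$1)/cr d e"
definition uu :: "real^2 \<Rightarrow> real^2 \<Rightarrow> real" where "uu d e = -2* d$1* e$1/cr d e"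
definition vv :: "real^2 \<Rightarrow> real^2 \<Rightarrow> real" where "vv d e = 2* d$2* e$2/cr d e"
definition qf :: "real^2 \<Rightarrow> real^2 \<Rightarrow> real^2 \<Rightarrow> real" where
  "qf d e y = (rr d e * y$1 + uu d e * y$2)^2 + (vv d e * y$1 - rr d e * y$2)^2"

lemma dist2: "dist (a::real^2) c = sqrt ((a$1-c$1)^2 + (a$2-c$2)^2)"
  by (simp add: dist_norm norm_eq_sqrt_inner inner_vec_def sum_2 power2_eq_square)

lemma mid2: "midpoint a c = (x::real^2) \<longleftrightarrow> a$1 + c$1 = 2* x$1 \<and> a$2 + c$2 = 2* x$2"
  by (auto simp add: midpoint_def vec2_eq)

lemma line_mem: "x \<in> line_through p d \<longleftrightarrow> (\<exists>t. x = p + t *\<^sub>R d)"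
  by (auto simp: line_through_def)

lemma line_rebase:
  assumes "q \<in> line_through p d" shows "line_through q d = line_through p d"
proof -
  obtain t where q: "q = p + t *\<^sub>R d" using assms line_mem by blast
  show ?thesis
  proof (rule set_eqI, rule iffI)
    fix x assume "x \<in> line_through q d"
    then obtain s where "x = q + s *\<^sub>R d" using line_mem by blast
    then have "x = p + (t + s) *\<^sub>R d" using q by (simp add: scaleR_add_left)
    then show "x \<in> line_through p d" using line_mem by blast
  next
    fix x assume "x \<in> line_through p d"
    then obtain s where "x = p + s *\<^sub>R d" using line_mem by blast
    then have "x = q + (s - t) *\<^sub>R d" using q by (simp add: scaleR_diff_left)
    then show "x \<in> line_through q d" using line_mem by blast
  qed
qed

lemma line_scale:
  assumes "c \<noteq> 0" shows "line_through p (c *\<^sub>R d) = line_through p d"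
proof (rule set_eqI, rule iffI)
  fix x assume "x \<in> line_through p (c *\<^sub>R d)"
  then obtain s where "x = p + s *\<^sub>R (c *\<^sub>R d)" using line_mem by blast
  then have "x = p + (s* c) *\<^sub>R d" by simp
  then show "x \<in> line_through p d" using line_mem by blast
next
  fix x assume "x \<in> line_through p d"
  then obtain s where "x = p + s *\<^sub>R d" using line_mem by blast
  then have "x = p + (s/c) *\<^sub>R (c *\<^sub>R d)" using assms by simp
  then show "x \<in> line_through p (c *\<^sub>R d)" using line_mem by blast
qed

lemma line_eq_cr:
  assumes "line_through p d = line_through q e" shows "cr d e = 0"
proof -
  have "q \<in> line_through q e" unfolding line_mem by (rule exI[of _ 0]) simp
  then obtain t where t: "q = p + t *\<^sub>R d" using assms line_mem by blast
  have "q + e \<in> line_through q e" unfolding line_mem by (rule exI[of _ 1]) simp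
  then obtain t' where t': "q + e = p + t' *\<^sub>R d" using assms line_mem by blast
  have he: "e = (t' - t) *\<^sub>R d" using t t' by (simp add: algebra_simps)
  show ?thesis unfolding cr_def he by (simp add: algebra_simps)
qed

lemma cr_zero:
  assumes "d \<noteq> 0" "cr d e = 0" shows "\<exists>c. e = c *\<^sub>R d"
proof -
  have n: "d$1^2 + d$2^2 \<noteq> 0" using assms(1) by (simp add: vec2_eq add_nonneg_eq_0_iff)
  define c where "c = (d$1* e$1 + d$2* e$2)/(d$1^2 + d$2^2)"
  have h: "d$1* e$2 = d$2* e$1" using assms(2) unfolding cr_def by simp
  have "e$1 * (d$1^2 + d$2^2) = (d$1* e$1 + d$2* e$2)* d$1"
    using h by (simp add: algebra_simps power2_eq_square)
  then have 1: "e$1 = c * d$1" unfolding c_def using n by (simp add: field_simps)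
  have "e$2 * (d$1^2 + d$2^2) = (d$1* e$1 + d$2* e$2)* d$2"
    using h by (simp add: algebra_simps power2_eq_square)
  then have 2: "e$2 = c * d$2" unfolding c_def using n by (simp add: field_simps)
  show ?thesis using 1 2 by (auto simp: vec2_eq)
qed

lemma line_translate: "(\<lambda>x. x + v) ` line_through p d = line_through (p + v) d"
  unfolding line_through_def by (auto simp: algebra_simps image_iff)

lemma line_same_dir:
  assumes "d \<noteq> 0" "e \<noteq> 0" "cr d e = 0" shows "line_through q e = line_through q d"
proof -
  obtain c where c: "e = c *\<^sub>R d" using cr_zero assms by blast
  then have "c \<noteq> 0" using assms(2) by auto
  then show ?thesis using c line_scale by simp
qed

lemma intersect:
  assumes "cr d e \<noteq> 0" shows "\<exists>P. P \<in> line_through p d \<and> P \<in> line_through q e"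
proof -
  define k where "k = cr d e"
  define s where "s = cr (q - p) e / k"
  define t where "t = - cr d (q - p) / k"
  have "p + s *\<^sub>R d = q + t *\<^sub>R e"
    unfolding vec2_eq s_def t_def k_def cr_def using assms
    by (simp add: cr_def field_simps)
  then show ?thesis unfolding line_mem by blast
qed

lemma nonpar:
  assumes "d \<noteq> 0" "e \<noteq> 0" "\<not> parallel_lines (line_through p d) (line_through q e)"
  shows "cr d e \<noteq> 0"
proof
  assume "cr d e = 0"
  then have "line_through q e = line_through q d" using line_same_dir assms by blast
  then show False using assms unfolding parallel_lines_def by blast
qed

lemma orth_iff:
  assumes "d \<noteq> 0" "e \<noteq> 0"
  shows "orthogonal_lines (line_through p d) (line_through q e) \<longleftrightarrow> d$1* e$1 + d$2* e$2 = 0"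
proof
  assume "orthogonal_lines (line_through p d) (line_through q e)"
  then obtain p' q' d' e' where h: "d' \<noteq> 0" "e' \<noteq> 0" "d' \<bullet> e' = 0"
    "line_through p d = line_through p' d'" "line_through q e = line_through q' e'"
    unfolding orthogonal_lines_def by blast
  have "cr d' d = 0" using line_eq_cr h(4)[symmetric] by blast
  then obtain a where a: "d = a *\<^sub>R d'" using cr_zero h(1) by blast
  have "cr e' e = 0" using line_eq_cr h(5)[symmetric] by blast
  then obtain b where b: "e = b *\<^sub>R e'" using cr_zero h(2) by blast
  have "d' $1 * e' $1 + d'$2 * e'$2 = 0" using h(3) by (simp add: inner_vec_def sum_2)
  then have "a* b*(d' $1 * e' $1 + d'$2 * e'$2) = 0" by simp
  then show "d$1* e$1 + d$2* e$2 = 0" using a b by (simp add: algebra_simps)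
next
  assume "d$1* e$1 + d$2* e$2 = 0"
  then have "d \<bullet> e = 0" by (simp add: inner_vec_def sum_2)
  then show "orthogonal_lines (line_through p d) (line_through q e)"
    unfolding orthogonal_lines_def using assms by blast
qed

lemma locus_sym: "rectangle_locus L1 L3 L2 L4 = rectangle_locus L2 L4 L1 L3"
  unfolding rectangle_locus_def
proof (rule Collect_cong)
  fix x
  show "(\<exists>a\<in>L1. \<exists>c\<in>L3. \<exists>b\<in>L2. \<exists>d\<in>L4. midpoint a c = x \<and> midpoint b d = x \<and> dist a c = dist b d) \<longleftrightarrow>
    (\<exists>a\<in>L2. \<exists>c\<in>L4. \<exists>b\<in>L1. \<exists>d\<in>L3. midpoint a c = x \<and> midpoint b d = x \<and> dist a c = dist b d)"
    by (rule iffI; (elim bexE conjE); (intro bexI conjI); (assumption | rule sym; assumption)?)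
qed

lemma par_not_hyp:
  assumes "parallel_lines L1 L3"
  shows "\<not> is_hyperbola (rectangle_locus L1 L3 L2 L4)"
proof
  assume h: "is_hyperbola (rectangle_locus L1 L3 L2 L4)"
  obtain p q d where d: "d \<noteq> 0" and L: "L1 = line_through p d" "L3 = line_through q d"
    using assms unfolding parallel_lines_def by blast
  have "rectangle_locus L1 L3 L2 L4 \<subseteq> {x. (- d$2)* x$1 + d$1* x$2 = ((- d$2)*(p$1+q$1) + d$1*(p$2+q$2))/2}"
  proof
    fix x assume "x \<in> rectangle_locus L1 L3 L2 L4"
    then obtain a c where a: "a \<in> L1" and c: "c \<in> L3" and m: "midpoint a c = x"
      unfolding rectangle_locus_def by blast
    obtain s where s: "a = p + s *\<^sub>R d" using a L line_mem by blast
    obtain t where t: "c = q + t *\<^sub>R d" using c L line_mem by blast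
    have "2* x$1 = p$1 + q$1 + (s+t)* d$1" "2* x$2 = p$2 + q$2 + (s+t)* d$2"
      using m s t unfolding mid2 by (auto simp: algebra_simps)
    then have "(- d$2)*(2* x$1) + d$1*(2* x$2) = (- d$2)*(p$1+q$1) + d$1*(p$2+q$2)"
      by (simp add: algebra_simps)
    then show "x \<in> {x. (- d$2)* x$1 + d$1* x$2 = ((- d$2)*(p$1+q$1) + d$1*(p$2+q$2))/2}"
      by (simp add: algebra_simps)
  qed
  from hyp_not_line[OF h this] have "d$1 = 0" "d$2 = 0" by auto
  then show False using d by (simp add: vec2_eq)
qed



lemma rr_iv:
  assumes "cr d e \<noteq> 0"
  obtains iv where "iv * (d$1* e$2 - d$2* e$1) = 1" "rr d e = (d$1* e$2 + d$2* e$1)* iv"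
    "uu d e = -2* d$1* e$1* iv" "vv d e = 2* d$2* e$2* iv"
proof -
  define iv where "iv = inverse (cr d e)"
  have "iv * (d$1* e$2 - d$2* e$1) = 1" using assms by (simp add: iv_def cr_def)
  moreover have "rr d e = (d$1* e$2 + d$2* e$1)* iv" "uu d e = -2* d$1* e$1* iv" "vv d e = 2* d$2* e$2* iv"
    by (simp_all add: rr_def uu_def vv_def iv_def divide_inverse)
  ultimately show ?thesis using that by blast
qed

lemma rr_comp:
  assumes "cr d e \<noteq> 0"
  shows "rr d e * (s* d$1 + t* e$1) + uu d e * (s* d$2 + t* e$2) = s* d$1 - t* e$1"
    "vv d e * (s* d$1 + t* e$1) - rr d e * (s* d$2 + t* e$2) = s* d$2 - t* e$2"
proof -
  obtain iv where iv: "iv * (d$1* e$2 - d$2* e$1) = 1" and R: "rr d e = (d$1* e$2 + d$2* e$1)* iv"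
    "uu d e = -2* d$1* e$1* iv" "vv d e = 2* d$2* e$2* iv" using rr_iv[OF assms] by blast
  show "rr d e * (s* d$1 + t* e$1) + uu d e * (s* d$2 + t* e$2) = s* d$1 - t* e$1"
    unfolding R using iv by algebra
  show "vv d e * (s* d$1 + t* e$1) - rr d e * (s* d$2 + t* e$2) = s* d$2 - t* e$2"
    unfolding R using iv by algebra
qed

lemma rr_inv:
  assumes "cr d e \<noteq> 0" shows "(rr d e)^2 + uu d e * vv d e = 1"
proof -
  obtain iv where iv: "iv * (d$1* e$2 - d$2* e$1) = 1" and R: "rr d e = (d$1* e$2 + d$2* e$1)* iv"
    "uu d e = -2* d$1* e$1* iv" "vv d e = 2* d$2* e$2* iv" using rr_iv[OF assms] by blast
  show ?thesis unfolding R using iv by algebra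
qed

lemma rr_scale:
  assumes "a \<noteq> 0" "b \<noteq> 0"
  shows "rr (a *\<^sub>R d) (b *\<^sub>R e) = rr d e" "uu (a *\<^sub>R d) (b *\<^sub>R e) = uu d e"
    "vv (a *\<^sub>R d) (b *\<^sub>R e) = vv d e"
proof -
  have c: "cr (a *\<^sub>R d) (b *\<^sub>R e) = (a* b) * cr d e" unfolding cr_def by (simp add: algebra_simps)
  have ab: "a* b \<noteq> 0" using assms by simp
  have n1: "(a *\<^sub>R d)$1 * (b *\<^sub>R e)$2 + (a *\<^sub>R d)$2 * (b *\<^sub>R e)$1 = (a* b) * (d$1* e$2 + d$2* e$1)"
    by (simp add: algebra_simps)
  have n2: "-2*(a *\<^sub>R d)$1 * (b *\<^sub>R e)$1 = (a* b) * (-2* d$1* e$1)" by (simp add: algebra_simps)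
  have n3: "2*(a *\<^sub>R d)$2 * (b *\<^sub>R e)$2 = (a* b) * (2* d$2* e$2)" by (simp add: algebra_simps)
  show "rr (a *\<^sub>R d) (b *\<^sub>R e) = rr d e" unfolding rr_def c n1 using ab by simp
  show "uu (a *\<^sub>R d) (b *\<^sub>R e) = uu d e" unfolding uu_def c n2 using ab by simp
  show "vv (a *\<^sub>R d) (b *\<^sub>R e) = vv d e" unfolding vv_def c n3 using ab by simp
qed

lemma rr_swap: "rr e d = - rr d e" "uu e d = - uu d e" "vv e d = - vv d e"
proof -
  have c: "cr e d = - cr d e" unfolding cr_def by simp
  show "rr e d = - rr d e" unfolding rr_def c by (simp add: algebra_simps)
  show "uu e d = - uu d e" unfolding uu_def c by (simp add: algebra_simps)
  show "vv e d = - vv d e" unfolding vv_def c by (simp add: algebra_simps)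
qed

lemma rr_orth:
  assumes "cr d e \<noteq> 0" shows "uu d e = vv d e \<longleftrightarrow> d$1* e$1 + d$2* e$2 = 0"
proof -
  obtain iv where iv: "iv * (d$1* e$2 - d$2* e$1) = 1" and R: "rr d e = (d$1* e$2 + d$2* e$1)* iv"
    "uu d e = -2* d$1* e$1* iv" "vv d e = 2* d$2* e$2* iv" using rr_iv[OF assms] by blast
  have "iv \<noteq> 0" using iv by auto
  have "uu d e - vv d e = -2* iv*(d$1* e$1 + d$2* e$2)" unfolding R by (simp add: algebra_simps)
  then show ?thesis using \<open>iv \<noteq> 0\<close> by auto
qed

lemma rr_fix:
  assumes "cr d e \<noteq> 0" "rr d e * y1 + uu d e * y2 = y1" "vv d e * y1 - rr d e * y2 = y2"
  shows "d$1* y2 - d$2* y1 = 0"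
proof -
  obtain iv where iv: "iv * (d$1* e$2 - d$2* e$1) = 1" and R: "rr d e = (d$1* e$2 + d$2* e$1)* iv"
    "uu d e = -2* d$1* e$1* iv" "vv d e = 2* d$2* e$2* iv" using rr_iv[OF assms(1)] by blast
  have a2: "(d$1* e$2 + d$2* e$1) * y1 - 2* d$1* e$1* y2 = (d$1* e$2 - d$2* e$1) * y1"
  proof -
    have "(d$1* e$2 - d$2* e$1) * ((d$1* e$2 + d$2* e$1)* iv * y1 + -2* d$1* e$1* iv * y2) = (d$1* e$2 - d$2* e$1) * y1"
      using assms(2) unfolding R by simp
    then show ?thesis using iv by algebra
  qed
  have a: "e$1 * (d$1* y2 - d$2* y1) = 0" using a2 by algebra
  have b2: "2* d$2* e$2 * y1 - (d$1* e$2 + d$2* e$1)* y2 = (d$1* e$2 - d$2* e$1) * y2"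
  proof -
    have "(d$1* e$2 - d$2* e$1) * (2* d$2* e$2* iv * y1 - (d$1* e$2 + d$2* e$1)* iv * y2) = (d$1* e$2 - d$2* e$1) * y2"
      using assms(3) unfolding R by simp
    then show ?thesis using iv by algebra
  qed
  have b: "e$2 * (d$1* y2 - d$2* y1) = 0" using b2 by algebra
  show ?thesis
  proof (rule ccontr)
    assume "d$1* y2 - d$2* y1 \<noteq> 0"
    then have "e$1 = 0" "e$2 = 0" using a b by auto
    then show False using iv by simp
  qed
qed

lemma rr_anti:
  assumes "cr d e \<noteq> 0" "rr d e * y1 + uu d e * y2 = - y1" "vv d e * y1 - rr d e * y2 = - y2"
  shows "y1* e$2 - y2* e$1 = 0"
proof -
  obtain iv where iv: "iv * (d$1* e$2 - d$2* e$1) = 1" and R: "rr d e = (d$1* e$2 + d$2* e$1)* iv"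
    "uu d e = -2* d$1* e$1* iv" "vv d e = 2* d$2* e$2* iv" using rr_iv[OF assms(1)] by blast
  have a2: "(d$1* e$2 + d$2* e$1) * y1 - 2* d$1* e$1* y2 = - (d$1* e$2 - d$2* e$1) * y1"
  proof -
    have "(d$1* e$2 - d$2* e$1) * ((d$1* e$2 + d$2* e$1)* iv * y1 + -2* d$1* e$1* iv * y2) = (d$1* e$2 - d$2* e$1) * (- y1)"
      using assms(2) unfolding R by (rule arg_cong)
    then show ?thesis using iv by algebra
  qed
  have a: "d$1 * (y1* e$2 - y2* e$1) = 0" using a2 by algebra
  have b2: "2* d$2* e$2 * y1 - (d$1* e$2 + d$2* e$1)* y2 = - (d$1* e$2 - d$2* e$1) * y2"
  proof -
    have "(d$1* e$2 - d$2* e$1) * (2* d$2* e$2* iv * y1 - (d$1* e$2 + d$2* e$1)* iv * y2) = (d$1* e$2 - d$2* e$1) * (- y2)"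
      using assms(3) unfolding R by (rule arg_cong)
    then show ?thesis using iv by algebra
  qed
  have b: "d$2 * (y1* e$2 - y2* e$1) = 0" using b2 by algebra
  show ?thesis
  proof (rule ccontr)
    assume "y1* e$2 - y2* e$1 \<noteq> 0"
    then have "d$1 = 0" "d$2 = 0" using a b by auto
    then show False using iv by simp
  qed
qed



lemma qf_nonneg: "qf d e y \<ge> 0" unfolding qf_def by simp

lemma pair_char:
  assumes k: "cr d e \<noteq> 0"
  shows "(\<exists>a\<in>line_through P d. \<exists>c\<in>line_through P e. midpoint a c = x \<and> dist a c = \<rho>)
     \<longleftrightarrow> (\<rho> \<ge> 0 \<and> \<rho>^2 = 4 * qf d e (x - P))"
proof -
  define Y1 where "Y1 = x$1 - P$1"
  define Y2 where "Y2 = x$2 - P$2"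
  have qfY: "qf d e (x - P) = (rr d e * Y1 + uu d e * Y2)^2 + (vv d e * Y1 - rr d e * Y2)^2"
    by (simp add: qf_def Y1_def Y2_def)
  have key: "4 * qf d e (x - P) = (s* d$1 - t* e$1)^2 + (s* d$2 - t* e$2)^2"
    if h1: "s* d$1 + t* e$1 = 2* Y1" and h2: "s* d$2 + t* e$2 = 2* Y2" for s t
  proof -
    have c1: "rr d e * (s* d$1 + t* e$1) + uu d e * (s* d$2 + t* e$2) = s* d$1 - t* e$1" by (rule rr_comp(1)[OF k])
    have c2: "vv d e * (s* d$1 + t* e$1) - rr d e * (s* d$2 + t* e$2) = s* d$2 - t* e$2" by (rule rr_comp(2)[OF k])
    have e1: "2*(rr d e * Y1 + uu d e * Y2) = s* d$1 - t* e$1"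
    proof -
      have "2*(rr d e * Y1 + uu d e * Y2) = rr d e * (2* Y1) + uu d e * (2* Y2)" by algebra
      then show ?thesis using c1 unfolding h1 h2 by simp
    qed
    have e2: "2*(vv d e * Y1 - rr d e * Y2) = s* d$2 - t* e$2"
    proof -
      have "2*(vv d e * Y1 - rr d e * Y2) = vv d e * (2* Y1) - rr d e * (2* Y2)" by algebra
      then show ?thesis using c2 unfolding h1 h2 by simp
    qed
    have "4 * qf d e (x - P) = (2*(rr d e * Y1 + uu d e * Y2))^2 + (2*(vv d e * Y1 - rr d e * Y2))^2"
      unfolding qfY by (simp add: power2_eq_square algebra_simps)
    then show ?thesis unfolding e1 e2 .
  qed
  show ?thesis
  proof
    assume "\<exists>a\<in>line_through P d. \<exists>c\<in>line_through P e. midpoint a c = x \<and> dist a c = \<rho>"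
    then obtain a c where a: "a \<in> line_through P d" and c: "c \<in> line_through P e"
      and m: "midpoint a c = x" and dd: "dist a c = \<rho>" by blast
    obtain s where s: "a = P + s *\<^sub>R d" using a line_mem by blast
    obtain t where t: "c = P + t *\<^sub>R e" using c line_mem by blast
    have h1: "s* d$1 + t* e$1 = 2* Y1" and h2: "s* d$2 + t* e$2 = 2* Y2"
      using m unfolding mid2 s t Y1_def Y2_def by (auto simp: algebra_simps)
    have "dist a c = sqrt ((s* d$1 - t* e$1)^2 + (s* d$2 - t* e$2)^2)"
      unfolding dist2 s t by (simp add: algebra_simps)
    then have "\<rho> = sqrt (4 * qf d e (x - P))" using dd key[OF h1 h2] by simp
    moreover have "4 * qf d e (x - P) \<ge> 0" using qf_nonneg by simp
    ultimately show "\<rho> \<ge> 0 \<and> \<rho>^2 = 4 * qf d e (x - P)" by simp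
  next
    assume r: "\<rho> \<ge> 0 \<and> \<rho>^2 = 4 * qf d e (x - P)"
    obtain iv where iv: "iv * (d$1* e$2 - d$2* e$1) = 1" using rr_iv[OF k] by blast
    define s where "s = 2*(Y1* e$2 - Y2* e$1)* iv"
    define t where "t = 2*(d$1* Y2 - d$2* Y1)* iv"
    have h1: "s* d$1 + t* e$1 = 2* Y1" unfolding s_def t_def using iv by algebra
    have h2: "s* d$2 + t* e$2 = 2* Y2" unfolding s_def t_def using iv by algebra
    define a where "a = P + s *\<^sub>R d"
    define c where "c = P + t *\<^sub>R e"
    have "a \<in> line_through P d" unfolding a_def line_mem by blast
    moreover have "c \<in> line_through P e" unfolding c_def line_mem by blast
    moreover have "midpoint a c = x" unfolding mid2 a_def c_def using h1 h2
      by (simp add: Y1_def Y2_def algebra_simps)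
    moreover have "dist a c = \<rho>"
    proof -
      have "dist a c = sqrt ((s* d$1 - t* e$1)^2 + (s* d$2 - t* e$2)^2)"
        unfolding dist2 a_def c_def by (simp add: algebra_simps)
      also have "\<dots> = sqrt (\<rho>^2)"
      proof -
        have "(s* d$1 - t* e$1)^2 + (s* d$2 - t* e$2)^2 = \<rho>^2" using key[OF h1 h2] r by linarith
        then show ?thesis by simp
      qed
      also have "\<dots> = \<rho>"
      proof -
        have "\<rho> \<ge> 0" using r by simp
        then show ?thesis by simp
      qed
      finally show ?thesis .
    qed
    ultimately show "\<exists>a\<in>line_through P d. \<exists>c\<in>line_through P e. midpoint a c = x \<and> dist a c = \<rho>"
      by blast
  qed
qed

lemma locus_char:
  assumes k1: "cr d1 d3 \<noteq> 0" and k2: "cr d2 d4 \<noteq> 0"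
  shows "rectangle_locus (line_through P d1) (line_through P d3) (line_through Q d2) (line_through Q d4)
     = {x. qf d1 d3 (x - P) - qf d2 d4 (x - Q) = 0}"
proof (rule set_eqI, rule iffI)
  fix x assume "x \<in> rectangle_locus (line_through P d1) (line_through P d3) (line_through Q d2) (line_through Q d4)"
  then obtain a c b dd where a: "a \<in> line_through P d1" and c: "c \<in> line_through P d3"
    and b: "b \<in> line_through Q d2" and dd: "dd \<in> line_through Q d4"
    and m1: "midpoint a c = x" and m2: "midpoint b dd = x" and eq: "dist a c = dist b dd"
    unfolding rectangle_locus_def by blast
  define r where "r = dist a c"
  have ex1: "\<exists>a\<in>line_through P d1. \<exists>c\<in>line_through P d3. midpoint a c = x \<and> dist a c = r"
    using a c m1 r_def by blast
  have 1: "r^2 = 4 * qf d1 d3 (x - P)" using iffD1[OF pair_char[OF k1] ex1] by simp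
  have ex2: "\<exists>b\<in>line_through Q d2. \<exists>dd\<in>line_through Q d4. midpoint b dd = x \<and> dist b dd = r"
    using b dd m2 eq r_def by auto
  have 2: "r^2 = 4 * qf d2 d4 (x - Q)" using iffD1[OF pair_char[OF k2] ex2] by simp
  show "x \<in> {x. qf d1 d3 (x - P) - qf d2 d4 (x - Q) = 0}" using 1 2 by simp
next
  fix x assume "x \<in> {x. qf d1 d3 (x - P) - qf d2 d4 (x - Q) = 0}"
  then have eq: "qf d1 d3 (x - P) = qf d2 d4 (x - Q)" by simp
  define \<rho> where "\<rho> = 2 * sqrt (qf d1 d3 (x - P))"
  have r0: "\<rho> \<ge> 0" unfolding \<rho>_def using qf_nonneg by simp
  have r2: "\<rho>^2 = 4 * qf d1 d3 (x - P)" unfolding \<rho>_def using qf_nonneg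
    by (simp add: power_mult_distrib)
  have r2': "\<rho>^2 = 4 * qf d2 d4 (x - Q)" using r2 eq by simp
  obtain a c where a: "a \<in> line_through P d1" and c: "c \<in> line_through P d3"
    and m1: "midpoint a c = x" and da: "dist a c = \<rho>"
    using iffD2[OF pair_char[OF k1] conjI[OF r0 r2]] by blast
  obtain b dd where b: "b \<in> line_through Q d2" and dd: "dd \<in> line_through Q d4"
    and m2: "midpoint b dd = x" and db: "dist b dd = \<rho>"
    using iffD2[OF pair_char[OF k2] conjI[OF r0 r2']] by blast
  have "dist a c = dist b dd" using da db by simp
  then show "x \<in> rectangle_locus (line_through P d1) (line_through P d3) (line_through Q d2) (line_through Q d4)"
    unfolding rectangle_locus_def using a b c dd m1 m2 by blast
qed

lemma trans_dirs:
  assumes "pair_translate (line_through P d1) (line_through P d3) (line_through Q d2) (line_through Q d4)"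
  shows "(cr d1 d2 = 0 \<and> cr d3 d4 = 0) \<or> (cr d1 d4 = 0 \<and> cr d3 d2 = 0)"
proof -
  obtain v where "{line_through (P + v) d1, line_through (P + v) d3} = {line_through Q d2, line_through Q d4}"
    using assms unfolding pair_translate_def line_translate by blast
  then have "(line_through (P + v) d1 = line_through Q d2 \<and> line_through (P + v) d3 = line_through Q d4) \<or>
    (line_through (P + v) d1 = line_through Q d4 \<and> line_through (P + v) d3 = line_through Q d2)"
    by (simp add: doubleton_eq_iff)
  then show ?thesis using line_eq_cr by blast
qed

lemma dirs_trans:
  assumes nz: "d1 \<noteq> 0" "d2 \<noteq> 0" "d3 \<noteq> 0" "d4 \<noteq> 0"
    and h: "(cr d1 d2 = 0 \<and> cr d3 d4 = 0) \<or> (cr d1 d4 = 0 \<and> cr d3 d2 = 0)"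
  shows "pair_translate (line_through P d1) (line_through P d3) (line_through Q d2) (line_through Q d4)"
proof -
  have im: "(\<lambda>x. x + (Q - P)) ` line_through P d = line_through Q d" for d
    unfolding line_translate by simp
  have "{line_through Q d1, line_through Q d3} = {line_through Q d2, line_through Q d4}"
    using h
  proof
    assume "cr d1 d2 = 0 \<and> cr d3 d4 = 0"
    then have "line_through Q d2 = line_through Q d1" "line_through Q d4 = line_through Q d3"
      using line_same_dir[OF nz(1) nz(2)] line_same_dir[OF nz(3) nz(4)] by simp_all
    then show ?thesis by simp
  next
    assume "cr d1 d4 = 0 \<and> cr d3 d2 = 0"
    then have "line_through Q d4 = line_through Q d1" "line_through Q d2 = line_through Q d3"
      using line_same_dir[OF nz(1) nz(4)] line_same_dir[OF nz(3) nz(2)] by simp_all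
    then show ?thesis by (simp add: insert_commute)
  qed
  then show ?thesis unfolding pair_translate_def by (intro exI[of _ "Q - P"]) (simp only: im)
qed

lemma dirs_rr:
  assumes nz: "d1 \<noteq> 0" "d2 \<noteq> 0" "d3 \<noteq> 0" "d4 \<noteq> 0"
  shows "cr d1 d2 = 0 \<Longrightarrow> cr d3 d4 = 0 \<Longrightarrow> rr d2 d4 = rr d1 d3 \<and> uu d2 d4 = uu d1 d3 \<and> vv d2 d4 = vv d1 d3"
    and "cr d1 d4 = 0 \<Longrightarrow> cr d3 d2 = 0 \<Longrightarrow> rr d2 d4 = - rr d1 d3 \<and> uu d2 d4 = - uu d1 d3 \<and> vv d2 d4 = - vv d1 d3"
proof -
  assume "cr d1 d2 = 0" "cr d3 d4 = 0"
  then obtain a b where a: "d2 = a *\<^sub>R d1" and b: "d4 = b *\<^sub>R d3" using cr_zero nz by metis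
  have "a \<noteq> 0" "b \<noteq> 0" using a b nz by auto
  then show "rr d2 d4 = rr d1 d3 \<and> uu d2 d4 = uu d1 d3 \<and> vv d2 d4 = vv d1 d3"
    unfolding a b using rr_scale by blast
next
  assume "cr d1 d4 = 0" "cr d3 d2 = 0"
  then obtain a b where a: "d4 = a *\<^sub>R d1" and b: "d2 = b *\<^sub>R d3" using cr_zero nz by metis
  have "a \<noteq> 0" "b \<noteq> 0" using a b nz by auto
  then show "rr d2 d4 = - rr d1 d3 \<and> uu d2 d4 = - uu d1 d3 \<and> vv d2 d4 = - vv d1 d3"
    unfolding a b using rr_scale rr_swap by metis
qed

lemma rr_dirs:
  assumes k1: "cr d1 d3 \<noteq> 0" and k2: "cr d2 d4 \<noteq> 0"
  shows "rr d2 d4 = rr d1 d3 \<Longrightarrow> uu d2 d4 = uu d1 d3 \<Longrightarrow> vv d2 d4 = vv d1 d3 \<Longrightarrow> cr d1 d2 = 0 \<and> cr d3 d4 = 0"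
    and "rr d2 d4 = - rr d1 d3 \<Longrightarrow> uu d2 d4 = - uu d1 d3 \<Longrightarrow> vv d2 d4 = - vv d1 d3 \<Longrightarrow> cr d1 d4 = 0 \<and> cr d3 d2 = 0"
proof -
  have s1: "rr d2 d4 * d2$1 + uu d2 d4 * d2$2 = d2$1" "vv d2 d4 * d2$1 - rr d2 d4 * d2$2 = d2$2"
    using rr_comp[OF k2, of 1 0] by simp_all
  have s2: "rr d2 d4 * d4$1 + uu d2 d4 * d4$2 = - d4$1" "vv d2 d4 * d4$1 - rr d2 d4 * d4$2 = - d4$2"
    using rr_comp[OF k2, of 0 1] by simp_all
  {
    assume e: "rr d2 d4 = rr d1 d3" "uu d2 d4 = uu d1 d3" "vv d2 d4 = vv d1 d3"
    have "d1$1* d2$2 - d1$2* d2$1 = 0" using rr_fix[OF k1] s1 unfolding e by blast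
    moreover have "d4$1* d3$2 - d4$2* d3$1 = 0" using rr_anti[OF k1] s2 unfolding e by blast
    ultimately show "cr d1 d2 = 0 \<and> cr d3 d4 = 0" unfolding cr_def by (simp add: algebra_simps)
  }
  {
    assume e: "rr d2 d4 = - rr d1 d3" "uu d2 d4 = - uu d1 d3" "vv d2 d4 = - vv d1 d3"
    have a1: "rr d1 d3 * d2$1 + uu d1 d3 * d2$2 = - d2$1" "vv d1 d3 * d2$1 - rr d1 d3 * d2$2 = - d2$2"
      using s1 unfolding e by (simp_all add: algebra_simps)
    have a2: "rr d1 d3 * d4$1 + uu d1 d3 * d4$2 = d4$1" "vv d1 d3 * d4$1 - rr d1 d3 * d4$2 = d4$2"
      using s2 unfolding e by (simp_all add: algebra_simps)
    have "d2$1* d3$2 - d2$2* d3$1 = 0" using rr_anti[OF k1 a1] .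
    moreover have "d1$1* d4$2 - d1$2* d4$1 = 0" using rr_fix[OF k1 a2] .
    ultimately show "cr d1 d4 = 0 \<and> cr d3 d2 = 0" unfolding cr_def by (simp add: algebra_simps)
  }
qed



lemma qf_expand: "qf d e y = (rr d e^2 + vv d e^2)* y$1^2 + 2*(rr d e*(uu d e - vv d e))* y$1* y$2 + (rr d e^2 + uu d e^2)* y$2^2"
  unfolding qf_def by (simp add: power2_eq_square algebra_simps)

lemma poly_expand:
  fixes a1 b1 c1 a2 b2 c2 x1 x2 P1 P2 Q1 Q2 :: real
  shows "(a1*(x1-P1)^2 + 2* b1*(x1-P1)*(x2-P2) + c1*(x2-P2)^2) - (a2*(x1-Q1)^2 + 2* b2*(x1-Q1)*(x2-Q2) + c2*(x2-Q2)^2)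
   = (a1-a2)* x1^2 + 2*(b1-b2)* x1* x2 + (c1-c2)* x2^2 + (-2* a1* P1 - 2* b1* P2 + 2* a2* Q1 + 2* b2* Q2)* x1
     + (-2* b1* P1 - 2* c1* P2 + 2* b2* Q1 + 2* c2* Q2)* x2
     + ((a1* P1^2 + 2* b1* P1* P2 + c1* P2^2) - (a2* Q1^2 + 2* b2* Q1* Q2 + c2* Q2^2))"
  by algebra

theorem theorem4p6:
  fixes L1 L2 L3 L4 :: "(real^2) set"
  assumes "is_line L1" and "is_line L2" and "is_line L3" and "is_line L4"
    and "L1 \<noteq> L3" and "L2 \<noteq> L4"
    and "{L1, L3} \<noteq> {L2, L4}"
  shows "is_hyperbola (rectangle_locus L1 L3 L2 L4) \<longleftrightarrow>
           (\<not> parallel_lines L1 L3 \<and> \<not> parallel_lines L2 L4 \<and>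
            \<not> (orthogonal_lines L1 L3 \<and> orthogonal_lines L2 L4) \<and>
            \<not> pair_translate L1 L3 L2 L4)"
proof (cases "parallel_lines L1 L3 \<or> parallel_lines L2 L4")
  case True
  then have "\<not> is_hyperbola (rectangle_locus L1 L3 L2 L4)"
  proof
    assume "parallel_lines L1 L3" then show ?thesis by (rule par_not_hyp)
  next
    assume "parallel_lines L2 L4" then show ?thesis unfolding locus_sym[of L1] by (rule par_not_hyp)
  qed
  then show ?thesis using True by blast
next
  case False
  then have np13: "\<not> parallel_lines L1 L3" and np24: "\<not> parallel_lines L2 L4" by auto
  obtain p1 d1 where d1: "d1 \<noteq> 0" and l1: "L1 = line_through p1 d1" using assms(1) is_line_def by blast
  obtain p2 d2 where d2: "d2 \<noteq> 0" and l2: "L2 = line_through p2 d2" using assms(2) is_line_def by blast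
  obtain p3 d3 where d3: "d3 \<noteq> 0" and l3: "L3 = line_through p3 d3" using assms(3) is_line_def by blast
  obtain p4 d4 where d4: "d4 \<noteq> 0" and l4: "L4 = line_through p4 d4" using assms(4) is_line_def by blast
  have k1: "cr d1 d3 \<noteq> 0" using nonpar[OF d1 d3] np13 l1 l3 by blast
  have k2: "cr d2 d4 \<noteq> 0" using nonpar[OF d2 d4] np24 l2 l4 by blast
  obtain P where P1: "P \<in> line_through p1 d1" and P3: "P \<in> line_through p3 d3" using intersect[OF k1] by blast
  obtain Q where Q2: "Q \<in> line_through p2 d2" and Q4: "Q \<in> line_through p4 d4" using intersect[OF k2] by blast
  have L1: "L1 = line_through P d1" using l1 line_rebase[OF P1] by simp
  have L3: "L3 = line_through P d3" using l3 line_rebase[OF P3] by simp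
  have L2: "L2 = line_through Q d2" using l2 line_rebase[OF Q2] by simp
  have L4: "L4 = line_through Q d4" using l4 line_rebase[OF Q4] by simp
  define r where "r = rr d1 d3"
  define u where "u = uu d1 d3"
  define v where "v = vv d1 d3"
  define rb where "rb = rr d2 d4"
  define ub where "ub = uu d2 d4"
  define vb where "vb = vv d2 d4"
  have inv1: "r^2 + u* v = 1" unfolding r_def u_def v_def by (rule rr_inv[OF k1])
  have inv2: "rb^2 + ub* vb = 1" unfolding rb_def ub_def vb_def by (rule rr_inv[OF k2])
  have orth: "(orthogonal_lines L1 L3 \<and> orthogonal_lines L2 L4) \<longleftrightarrow> (u = v \<and> ub = vb)"
    unfolding L1 L2 L3 L4 orth_iff[OF d1 d3] orth_iff[OF d2 d4] u_def v_def ub_def vb_def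
      rr_orth[OF k1] rr_orth[OF k2] by simp
  have trans: "pair_translate L1 L3 L2 L4 \<longleftrightarrow>
     ((rb = r \<and> ub = u \<and> vb = v) \<or> (rb = -r \<and> ub = -u \<and> vb = -v))"
  proof
    assume "pair_translate L1 L3 L2 L4"
    then have "(cr d1 d2 = 0 \<and> cr d3 d4 = 0) \<or> (cr d1 d4 = 0 \<and> cr d3 d2 = 0)"
      unfolding L1 L2 L3 L4 by (rule trans_dirs)
    then show "(rb = r \<and> ub = u \<and> vb = v) \<or> (rb = -r \<and> ub = -u \<and> vb = -v)"
      using dirs_rr[OF d1 d2 d3 d4] unfolding r_def u_def v_def rb_def ub_def vb_def by blast
  next
    assume "(rb = r \<and> ub = u \<and> vb = v) \<or> (rb = -r \<and> ub = -u \<and> vb = -v)"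
    then have "(cr d1 d2 = 0 \<and> cr d3 d4 = 0) \<or> (cr d1 d4 = 0 \<and> cr d3 d2 = 0)"
      using rr_dirs[OF k1 k2] unfolding r_def u_def v_def rb_def ub_def vb_def by blast
    then show "pair_translate L1 L3 L2 L4" unfolding L1 L2 L3 L4 by (rule dirs_trans[OF d1 d2 d3 d4])
  qed
  define a1 where "a1 = r^2 + v^2"
  define b1 where "b1 = r*(u-v)"
  define c1 where "c1 = r^2 + u^2"
  define a2 where "a2 = rb^2 + vb^2"
  define b2 where "b2 = rb*(ub-vb)"
  define c2 where "c2 = rb^2 + ub^2"
  define f where "f = (\<lambda>x::real^2. qf d1 d3 (x - P) - qf d2 d4 (x - Q))"
  have loc: "rectangle_locus L1 L3 L2 L4 = {x. f x = 0}"
    unfolding L1 L2 L3 L4 f_def by (rule locus_char[OF k1 k2])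
  define D where "D = -2* a1* P$1 - 2* b1* P$2 + 2* a2* Q$1 + 2* b2* Q$2"
  define E where "E = -2* b1* P$1 - 2* c1* P$2 + 2* b2* Q$1 + 2* c2* Q$2"
  define F where "F = (a1* P$1^2 + 2* b1* P$1* P$2 + c1* P$2^2) - (a2* Q$1^2 + 2* b2* Q$1* Q$2 + c2* Q$2^2)"
  have fexp: "\<forall>x. f x = (a1-a2)* x$1^2 + 2*(b1-b2)* x$1* x$2 + (c1-c2)* x$2^2 + D* x$1 + E* x$2 + F"
  proof
    fix x :: "real^2"
    have "f x = (a1*(x$1-P$1)^2 + 2* b1*(x$1-P$1)*(x$2-P$2) + c1*(x$2-P$2)^2)
       - (a2*(x$1-Q$1)^2 + 2* b2*(x$1-Q$1)*(x$2-Q$2) + c2*(x$2-Q$2)^2)"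
      unfolding f_def qf_expand a1_def b1_def c1_def a2_def b2_def c2_def r_def u_def v_def
        rb_def ub_def vb_def by simp
    then show "f x = (a1-a2)* x$1^2 + 2*(b1-b2)* x$1* x$2 + (c1-c2)* x$2^2 + D* x$1 + E* x$2 + F"
      unfolding poly_expand D_def E_def F_def by simp
  qed
  have dalg: "(a1-a2)*(c1-c2) - (b1-b2)^2 = -((ub* v - vb* u)^2 + (rb*(u-v) - r*(ub-vb))^2)"
    unfolding a1_def a2_def b1_def b2_def c1_def c2_def using det_alg[OF inv1 inv2]
    by (simp add: algebra_simps)
  show ?thesis
  proof (cases "(u = v \<and> ub = vb) \<or> (rb = r \<and> ub = u \<and> vb = v) \<or> (rb = -r \<and> ub = -u \<and> vb = -v)")
    case True
    have z: "a1 - a2 = 0 \<and> b1 - b2 = 0 \<and> c1 - c2 = 0"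
    proof -
      { assume uv: "u = v" "ub = vb"
        have "a1 = 1" unfolding a1_def using inv1 uv by (simp add: power2_eq_square)
        moreover have "c1 = 1" unfolding c1_def using inv1 uv by (simp add: power2_eq_square)
        moreover have "a2 = 1" unfolding a2_def using inv2 uv by (simp add: power2_eq_square)
        moreover have "c2 = 1" unfolding c2_def using inv2 uv by (simp add: power2_eq_square)
        ultimately have ?thesis unfolding b1_def b2_def using uv by simp }
      then show ?thesis using True unfolding a1_def a2_def b1_def b2_def c1_def c2_def
        by (auto simp: algebra_simps)
    qed
    have "\<forall>x. f x = D* x$1 + E* x$2 + F" using fexp z by simp
    then have "\<not> is_hyperbola (rectangle_locus L1 L3 L2 L4)" unfolding loc by (rule affine_not_hyp)
    then show ?thesis using True orth trans by blast
  next
    case False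
    have "(ub* v - vb* u)^2 + (rb*(u-v) - r*(ub-vb))^2 \<noteq> 0"
    proof
      assume "(ub* v - vb* u)^2 + (rb*(u-v) - r*(ub-vb))^2 = 0"
      then have "ub* v = vb* u" "rb*(u-v) = r*(ub-vb)" by (simp_all add: add_nonneg_eq_0_iff)
      then show False using det_zero_cases[OF inv1 inv2] False by blast
    qed
    then have "(a1-a2)*(c1-c2) < (b1-b2)^2" using dalg
      by (smt (verit) zero_le_power2)
    then have "is_hyperbola (rectangle_locus L1 L3 L2 L4)" unfolding loc by (rule quad_hyp[OF fexp])
    then show ?thesis using False orth trans np13 np24 by blast
  qed
qed

end
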